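(* Let $W_{max}$ be the maximum weight assigned to a vertex. The population size of DEMO on the weighted vertex cover problem is at all times upper bounded by $O\big(n(\log n+\log W_{max})\big)$.
   Context: Weighted vertex cover: $G=(V,E)$, $V=\{v_1,\dots,v_n\}$, $w:V\to\mathbb{N}^+$. Search points $x\in\{0,1\}^n$; $Cost(x)=\sum_i w(v_i)x_i$; $G(x)=(V(x),E(x))$ with $V(x)=V\setminus\{v_i:x_i=1\}$, $E(x)$ = edges with no selected endpoint; $LP(x)$ = optimal value of: minimize $\sum_{v_i\in V(x)}w(v_i)y_i$ s.t. $y_i+y_j\ge1$ for $\{v_i,v_j\}\in E(x)$, $0\le y_i\le1$. $f(x)=(Cost(x),LP(x))$, $f(x)\le f(y)$ componentwise. DEMO: $\delta=\frac1{2n}$, $b_1(x)=\lceil\log_{1+\delta}(1+Cost(x))\rceil$, $b_2(x)=\lceil\log_{1+\delta}(1+LP(x))\rceil$, $b=(b_1,b_2)$. Start with uniformly random $x$, $P=\{x\}$. Each iteration: choose $x\in P$ uniformly; create $x'$ by flipping each bit independently with probability $1/n$; if some $y\in P$ satisfies ($f(y)\le f(x')$ and $f(y)\ne f(x')$) or ($b(y)=b(x')$ and $Cost(y)+2LP(y)\le Cost(x')+2LP(x')$), discard $x'$; otherwise add $x'$ and delete all other $z\in P$ with $f(x')\le f(z)$ or $b(z)=b(x')$. *)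

theory Defs
  imports Complex_Main
begin

(* Instance: n vertices v_0..v_{n-1} (0-indexed), weights w :: nat => nat,
   undirected edge set E :: nat set set. Search points: bool lists of length n. *)

definition wvc_graph :: "nat \<Rightarrow> (nat \<Rightarrow> nat) \<Rightarrow> nat set set \<Rightarrow> bool" where
  "wvc_graph n w E \<longleftrightarrow>
     (\<forall>e\<in>E. \<exists>i j. e = {i, j} \<and> i \<noteq> j \<and> i < n \<and> j < n) \<and> (\<forall>i<n. w i > 0)"

definition Cost :: "nat \<Rightarrow> (nat \<Rightarrow> nat) \<Rightarrow> bool list \<Rightarrow> nat" where
  "Cost n w x = (\<Sum>i<n. w i * (if x ! i then 1 else 0))"

definition Vx :: "nat \<Rightarrow> bool list \<Rightarrow> nat set" where
  "Vx n x = {i. i < n \<and> \<not> x ! i}"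

definition Ex :: "nat set set \<Rightarrow> bool list \<Rightarrow> nat set set" where
  "Ex E x = {e \<in> E. \<forall>v\<in>e. \<not> x ! v}"

definition LP_feasible :: "nat \<Rightarrow> nat set set \<Rightarrow> bool list \<Rightarrow> (nat \<Rightarrow> real) \<Rightarrow> bool" where
  "LP_feasible n E x y \<longleftrightarrow>
     (\<forall>i \<in> Vx n x. 0 \<le> y i \<and> y i \<le> 1) \<and>
     (\<forall>i j. {i, j} \<in> Ex E x \<longrightarrow> y i + y j \<ge> 1)"

definition LP :: "nat \<Rightarrow> (nat \<Rightarrow> nat) \<Rightarrow> nat set set \<Rightarrow> bool list \<Rightarrow> real" where
  "LP n w E x = Inf ((\<lambda>y. \<Sum>i\<in>Vx n x. real (w i) * y i) ` {y. LP_feasible n E x y})"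

definition dominates :: "nat \<Rightarrow> (nat \<Rightarrow> nat) \<Rightarrow> nat set set \<Rightarrow> bool list \<Rightarrow> bool list \<Rightarrow> bool" where
  "dominates n w E y x \<longleftrightarrow>
     Cost n w y \<le> Cost n w x \<and> LP n w E y \<le> LP n w E x \<and>
     (Cost n w y \<noteq> Cost n w x \<or> LP n w E y \<noteq> LP n w E x)"

definition weakly_dom :: "nat \<Rightarrow> (nat \<Rightarrow> nat) \<Rightarrow> nat set set \<Rightarrow> bool list \<Rightarrow> bool list \<Rightarrow> bool" where
  "weakly_dom n w E x z \<longleftrightarrow> Cost n w x \<le> Cost n w z \<and> LP n w E x \<le> LP n w E z"

definition demo_delta :: "nat \<Rightarrow> real" where
  "demo_delta n = 1 / (2 * real n)"

definition box :: "nat \<Rightarrow> (nat \<Rightarrow> nat) \<Rightarrow> nat set set \<Rightarrow> bool list \<Rightarrow> int \<times> int" where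
  "box n w E x =
     (\<lceil>log (1 + demo_delta n) (1 + real (Cost n w x))\<rceil>,
      \<lceil>log (1 + demo_delta n) (1 + LP n w E x)\<rceil>)"

definition demo_rejects :: "nat \<Rightarrow> (nat \<Rightarrow> nat) \<Rightarrow> nat set set \<Rightarrow> bool list set \<Rightarrow> bool list \<Rightarrow> bool" where
  "demo_rejects n w E P x' \<longleftrightarrow>
     (\<exists>y\<in>P. dominates n w E y x' \<or>
        (box n w E y = box n w E x' \<and>
         real (Cost n w y) + 2 * LP n w E y \<le> real (Cost n w x') + 2 * LP n w E x'))"

(* One DEMO iteration: x is selected from P, x' is an offspring (any bit string of
   length n has positive probability under standard bit mutation when n >= 2). *)
definition demo_update :: "nat \<Rightarrow> (nat \<Rightarrow> nat) \<Rightarrow> nat set set \<Rightarrow> bool list set \<Rightarrow> bool list \<Rightarrow> bool list set" where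
  "demo_update n w E P x' =
     (if demo_rejects n w E P x' then P
      else insert x' {z \<in> P. \<not> (weakly_dom n w E x' z \<or> box n w E z = box n w E x')})"

(* Populations that can occur (with positive probability) at some time of a DEMO run *)
inductive demo_reachable :: "nat \<Rightarrow> (nat \<Rightarrow> nat) \<Rightarrow> nat set set \<Rightarrow> bool list set \<Rightarrow> bool" for n w E where
  init: "length x = n \<Longrightarrow> demo_reachable n w E {x}"
| step: "demo_reachable n w E P \<Longrightarrow> x \<in> P \<Longrightarrow> length x' = n \<Longrightarrow>
         demo_reachable n w E (demo_update n w E P x')"

definition Wmax :: "nat \<Rightarrow> (nat \<Rightarrow> nat) \<Rightarrow> nat" where
  "Wmax n w = Max (w ` {..<n})"

end

theory Submission
  imports Defs
begin

lemma Vx_sub: "Vx n x \<subseteq> {..<n}" by (auto simp: Vx_def)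

lemma LP_bounds:
  shows "0 \<le> LP n w E x" and "LP n w E x \<le> (\<Sum>i\<in>Vx n x. real (w i))"
proof -
  define S where "S = (\<lambda>y. \<Sum>i\<in>Vx n x. real (w i) * y i) ` {y. LP_feasible n E x y}"
  have feas: "LP_feasible n E x (\<lambda>_. 1)" by (simp add: LP_feasible_def)
  have mem: "(\<Sum>i\<in>Vx n x. real (w i)) \<in> S"
  proof -
    have "(\<Sum>i\<in>Vx n x. real (w i)) = (\<lambda>y. \<Sum>i\<in>Vx n x. real (w i) * y i) (\<lambda>_. 1)" by simp
    moreover have "(\<lambda>_. 1::real) \<in> {y. LP_feasible n E x y}" using feas by simp
    ultimately show ?thesis unfolding S_def by (rule image_eqI)
  qed
  have nn: "\<forall>s\<in>S. 0 \<le> s"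
    unfolding S_def LP_feasible_def by (auto intro!: sum_nonneg)
  hence bdd: "bdd_below S" by (auto simp: bdd_below_def)
  have "LP n w E x = Inf S" by (simp add: LP_def S_def)
  then show "0 \<le> LP n w E x" using cInf_greatest[of S 0] nn mem by auto
  show "LP n w E x \<le> (\<Sum>i\<in>Vx n x. real (w i))"
    using \<open>LP n w E x = Inf S\<close> cInf_lower[OF mem bdd] by simp
qed

lemma Wmax_ge: "i < n \<Longrightarrow> w i \<le> Wmax n w"
  unfolding Wmax_def by (rule Max_ge) auto

lemma Cost_le: "real (Cost n w x) \<le> real n * real (Wmax n w)"
proof -
  have "Cost n w x \<le> (\<Sum>i<n. Wmax n w)" unfolding Cost_def
    by (rule sum_mono) (auto intro: Wmax_ge)
  also have "\<dots> = n * Wmax n w" by simp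
  finally have "Cost n w x \<le> n * Wmax n w" .
  hence "real (Cost n w x) \<le> real (n * Wmax n w)" by (rule of_nat_mono)
  thus ?thesis by simp
qed

lemma LP_le: "LP n w E x \<le> real n * real (Wmax n w)"
proof -
  have "(\<Sum>i\<in>Vx n x. real (w i)) \<le> (\<Sum>i\<in>Vx n x. real (Wmax n w))"
    by (rule sum_mono) (auto simp: Vx_def intro: Wmax_ge)
  also have "\<dots> = real (card (Vx n x)) * real (Wmax n w)" by simp
  also have "\<dots> \<le> real n * real (Wmax n w)"
    using card_mono[OF _ Vx_sub, of n x] by (intro mult_right_mono) auto
  finally show ?thesis using LP_bounds(2)[of n w E x] by linarith
qed

definition Inv where
  "Inv n w E P \<longleftrightarrow> finite P \<and> (\<forall>y\<in>P. \<forall>z\<in>P. y \<noteq> z \<longrightarrow>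
      box n w E y \<noteq> box n w E z \<and> \<not> weakly_dom n w E y z)"

lemma reach_Inv: "demo_reachable n w E P \<Longrightarrow> Inv n w E P"
proof (induction rule: demo_reachable.induct)
  case (init x) thus ?case by (simp add: Inv_def)
next
  case (step P x x')
  show ?case
  proof (cases "demo_rejects n w E P x'")
    case True thus ?thesis using step by (simp add: demo_update_def)
  next
    case False
    let ?Q = "{z \<in> P. \<not> (weakly_dom n w E x' z \<or> box n w E z = box n w E x')}"
    have upd: "demo_update n w E P x' = insert x' ?Q" using False by (simp add: demo_update_def)
    have nz: "\<not> weakly_dom n w E z x'" if "z \<in> P" for z
    proof
      assume wd: "weakly_dom n w E z x'"
      have "\<not> dominates n w E z x'" using False that by (auto simp: demo_rejects_def)
      hence eq: "Cost n w z = Cost n w x'" "LP n w E z = LP n w E x'"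
        using wd by (auto simp: dominates_def weakly_dom_def)
      hence "box n w E z = box n w E x'" by (simp add: box_def)
      thus False using False that eq by (auto simp: demo_rejects_def)
    qed
    have fin: "finite P" and pw: "\<And>y z. y \<in> P \<Longrightarrow> z \<in> P \<Longrightarrow> y \<noteq> z \<Longrightarrow>
      box n w E y \<noteq> box n w E z \<and> \<not> weakly_dom n w E y z"
      using step.IH unfolding Inv_def by blast+
    have "finite (insert x' ?Q)" using fin by simp
    moreover have "\<forall>y\<in>insert x' ?Q. \<forall>z\<in>insert x' ?Q. y \<noteq> z \<longrightarrow>
      box n w E y \<noteq> box n w E z \<and> \<not> weakly_dom n w E y z"
    proof (intro ballI impI)
      fix y z assume y: "y \<in> insert x' ?Q" and z: "z \<in> insert x' ?Q" and ne: "y \<noteq> z"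
      show "box n w E y \<noteq> box n w E z \<and> \<not> weakly_dom n w E y z"
      proof (cases "y = x'")
        case True thus ?thesis using z ne by auto
      next
        case yn: False
        show ?thesis
        proof (cases "z = x'")
          case True thus ?thesis using y yn nz by auto
        next
          case False thus ?thesis using y z yn ne pw by auto
        qed
      qed
    qed
    ultimately show ?thesis unfolding upd Inv_def by blast
  qed
qed


lemma box_fst_mono:
  assumes "1 < b" "b = 1 + demo_delta n" "Cost n w y \<le> Cost n w z"
  shows "fst (box n w E y) \<le> fst (box n w E z)"
  unfolding box_def using assms by (auto intro!: ceiling_mono log_mono)

lemma box_snd_mono:
  assumes "1 < b" "b = 1 + demo_delta n" "LP n w E y \<le> LP n w E z"
  shows "snd (box n w E y) \<le> snd (box n w E z)"
proof -
  have "0 \<le> LP n w E y" by (rule LP_bounds)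
  thus ?thesis unfolding box_def using assms by (auto intro!: ceiling_mono log_mono)
qed

lemma box_range:
  assumes "1 < b" "b = 1 + demo_delta n"
  shows "0 \<le> fst (box n w E x) \<and> fst (box n w E x) \<le> \<lceil>log b (1 + real n * real (Wmax n w))\<rceil>
    \<and> 0 \<le> snd (box n w E x) \<and> snd (box n w E x) \<le> \<lceil>log b (1 + real n * real (Wmax n w))\<rceil>"
proof -
  have l0: "0 \<le> LP n w E x" by (rule LP_bounds)
  have c1: "real (Cost n w x) \<le> real n * real (Wmax n w)" by (rule Cost_le)
  have l1: "LP n w E x \<le> real n * real (Wmax n w)" by (rule LP_le)
  have a: "0 \<le> log b (1 + real (Cost n w x))" using assms by simp
  have b: "0 \<le> log b (1 + LP n w E x)" using assms l0 by simp
  have c: "log b (1 + real (Cost n w x)) \<le> log b (1 + real n * real (Wmax n w))"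
    using assms c1 by (intro log_mono) auto
  have d: "log b (1 + LP n w E x) \<le> log b (1 + real n * real (Wmax n w))"
    using assms l1 l0 by (intro log_mono) auto
  have e1: "fst (box n w E x) = \<lceil>log b (1 + real (Cost n w x))\<rceil>"
    and e2: "snd (box n w E x) = \<lceil>log b (1 + LP n w E x)\<rceil>" using assms(2) by (simp_all add: box_def)
  have z: "0 \<le> \<lceil>t\<rceil>" if "0 \<le> t" for t :: real using that by linarith
  show ?thesis unfolding e1 e2 using z[OF a] z[OF b] ceiling_mono[OF c] ceiling_mono[OF d] by simp
qed

lemma card_bound:
  assumes "demo_reachable n w E P" "n \<ge> 1"
  shows "real (card P) \<le> 2 * log (1 + demo_delta n) (1 + real n * real (Wmax n w)) + 3"
proof -
  define b where "b = 1 + demo_delta n"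
  have b1: "1 < b" using assms(2) by (simp add: b_def demo_delta_def)
  define K where "K = \<lceil>log b (1 + real n * real (Wmax n w))\<rceil>"
  have inv: "Inv n w E P" using assms(1) by (rule reach_Inv)
  hence fin: "finite P" and pw: "\<And>y z. y \<in> P \<Longrightarrow> z \<in> P \<Longrightarrow> y \<noteq> z \<Longrightarrow>
      box n w E y \<noteq> box n w E z \<and> \<not> weakly_dom n w E y z" unfolding Inv_def by blast+
  define g where "g x = fst (box n w E x) - snd (box n w E x)" for x
  have key: "g y \<noteq> g z" if "Cost n w y < Cost n w z" "y \<in> P" "z \<in> P" for y z
  proof
    assume eq: "g y = g z"
    have ne: "y \<noteq> z" using that by auto
    have "LP n w E z < LP n w E y"
    proof (rule ccontr)
      assume "\<not> LP n w E z < LP n w E y"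
      hence "weakly_dom n w E y z" using that(1) by (simp add: weakly_dom_def)
      thus False using pw[OF that(2,3) ne] by blast
    qed
    hence s: "snd (box n w E z) \<le> snd (box n w E y)"
      using box_snd_mono[OF b1 b_def] by auto
    have f: "fst (box n w E y) \<le> fst (box n w E z)"
      using box_fst_mono[OF b1 b_def] that(1) by auto
    have "box n w E y = box n w E z" using s f eq unfolding g_def by (simp add: prod_eq_iff)
    thus False using pw[OF that(2,3) ne] by simp
  qed
  have inj: "inj_on g P"
  proof (rule inj_onI)
    fix y z assume y: "y \<in> P" and z: "z \<in> P" and eq: "g y = g z"
    show "y = z"
    proof (rule ccontr)
      assume ne: "y \<noteq> z"
      have "Cost n w y \<noteq> Cost n w z"
      proof
        assume ce: "Cost n w y = Cost n w z"
        show False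
        proof (cases "LP n w E y \<le> LP n w E z")
          case True thus False using pw[OF y z ne] ce by (simp add: weakly_dom_def)
        next
          case False thus False using pw[OF z y] ne ce by (simp add: weakly_dom_def)
        qed
      qed
      hence "Cost n w y < Cost n w z \<or> Cost n w z < Cost n w y" by linarith
      thus False
      proof
        assume "Cost n w y < Cost n w z" thus False using key[OF _ y z] eq by blast
      next
        assume "Cost n w z < Cost n w y" thus False using key[OF _ z y] eq by simp
      qed
    qed
  qed
  have sub: "g ` P \<subseteq> {-K..K}"
  proof
    fix v assume "v \<in> g ` P"
    then obtain x where v: "v = g x" by auto
    show "v \<in> {-K..K}" using box_range[OF b1 b_def, of w E x] unfolding v g_def K_def by simp
  qed
  have "card P = card (g ` P)" using card_image[OF inj] by simp
  also have "\<dots> \<le> card {-K..K}" using sub by (intro card_mono) auto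
  finally have cK: "card P \<le> nat (2 * K + 1)" by simp
  have "0 \<le> log b (1 + real n * real (Wmax n w))" using log_mono[OF b1, of 1 "1 + real n * real (Wmax n w)"] by simp
  hence "0 \<le> K" unfolding K_def by linarith
  hence "int (card P) \<le> 2 * K + 1" using cK by linarith
  hence "real_of_int (int (card P)) \<le> real_of_int (2 * K + 1)" by (simp only: of_int_le_iff)
  hence "real (card P) \<le> 2 * real_of_int K + 1" by simp
  moreover have "real_of_int K \<le> log b (1 + real n * real (Wmax n w)) + 1"
    unfolding K_def by linarith
  ultimately show ?thesis unfolding b_def by linarith
qed

theorem lemma6:
  "\<exists>C::real. \<forall>n w E P. n \<ge> 2 \<longrightarrow> wvc_graph n w E \<longrightarrow> demo_reachable n w E P \<longrightarrow>
      real (card P) \<le> C * real n * (ln (real n) + ln (real (Wmax n w)))"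
proof (intro exI allI impI)
  fix n w E P
  assume n2: "n \<ge> (2::nat)" and g: "wvc_graph n w E" and r: "demo_reachable n w E P"
  define W where "W = real (Wmax n w)"
  define d where "d = demo_delta n"
  have W1: "1 \<le> W"
  proof -
    have "0 < w 0" using g n2 by (simp add: wvc_graph_def)
    moreover have "w 0 \<le> Wmax n w" using n2 by (intro Wmax_ge) auto
    ultimately show ?thesis unfolding W_def by simp
  qed
  have nr: "2 \<le> real n" using n2 by simp
  have d0: "0 < d" and d4: "d \<le> 1/4" using nr by (auto simp: d_def demo_delta_def field_simps)
  have "d - d^2 \<le> ln (1 + d)" using d0 d4 by (intro ln_one_plus_pos_lower_bound) auto
  moreover have "d / 2 \<le> d - d^2" using d0 d4 by (simp add: power2_eq_square mult_left_mono)
  ultimately have lnb: "d / 2 \<le> ln (1 + d)" by linarith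
  have dn: "d / 2 = 1 / (4 * real n)" by (simp add: d_def demo_delta_def)
  define M where "M = real n * W"
  have M2: "2 \<le> M" using nr W1 unfolding M_def using mult_mono[of 2 "real n" 1 W] by simp
  have lnpos: "0 < ln (1 + d)" using d0 by simp
  have L: "log (1 + d) (1 + M) = ln (1 + M) / ln (1 + d)" by (simp add: log_def)
  have lnM0: "0 \<le> ln (1 + M)" using M2 by simp
  have "ln (1 + M) / ln (1 + d) \<le> ln (1 + M) / (d / 2)"
    using lnb lnpos lnM0 d0 by (intro divide_left_mono) auto
  also have "\<dots> = 4 * real n * ln (1 + M)" unfolding dn by simp
  finally have Lb: "log (1 + d) (1 + M) \<le> 4 * real n * ln (1 + M)" using L by simp
  have "ln (1 + M) \<le> ln (2 * M)" using M2 by simp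
  also have "\<dots> = ln 2 + ln (real n) + ln W" unfolding M_def using nr W1 by (simp add: ln_mult)
  also have "\<dots> \<le> 2 * (ln (real n) + ln W)"
  proof -
    have "ln (2::real) \<le> ln (real n)" using nr by simp
    thus ?thesis using ln_ge_zero[OF W1] by (smt (verit))
  qed
  finally have lnM: "ln (1 + M) \<le> 2 * (ln (real n) + ln W)" by linarith
  have lnW0: "0 \<le> ln W" using W1 by simp
  have "1/4 \<le> ln (1 + (1/2::real))"
    using ln_one_plus_pos_lower_bound[of "1/2::real"] by (simp add: power2_eq_square)
  also have "\<dots> \<le> ln (real n)" using nr by simp
  finally have ln14: "1/4 \<le> ln (real n)" .
  define T where "T = ln (real n) + ln W"
  have T14: "1/4 \<le> T" using ln14 lnW0 unfolding T_def by linarith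
  have nT: "1/2 \<le> real n * T" using mult_mono[of 2 "real n" "1/4" T] nr T14 by simp
  have c: "real (card P) \<le> 2 * log (1 + d) (1 + M) + 3"
    using card_bound[OF r] n2 unfolding d_def M_def W_def by simp
  have "4 * real n * ln (1 + M) \<le> 4 * real n * (2 * T)"
    using lnM nr unfolding T_def by (intro mult_left_mono) auto
  hence "real (card P) \<le> 16 * (real n * T) + 3" using c Lb by linarith
  also have "\<dots> \<le> 22 * (real n * T)" using nT by linarith
  finally show "real (card P) \<le> 22 * real n * (ln (real n) + ln (real (Wmax n w)))"
    unfolding T_def W_def by (simp add: mult.assoc)
qed

end
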